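(* Let $u,v$ be uniform twins, or opposite twins, of an oriented graph $G^\sigma$. Then $sr(G^\sigma)=sr(G^\sigma-u)=sr(G^\sigma-v)$.
   Context: An oriented graph $G^\sigma$ is a simple graph $G$ together with an orientation of each edge. Its skew-adjacency matrix $S(G^\sigma)=(s_{ij})$ has $s_{ij}=1$ if there is an arc from $v_i$ to $v_j$, $s_{ij}=-1$ if there is an arc from $v_j$ to $v_i$, and $0$ otherwise; the skew-rank $sr(G^\sigma)$ is the rank of $S(G^\sigma)$. $G^\sigma-u$ is obtained by deleting $u$ and its incident edges. For a common neighbor $w$ of two nonadjacent vertices $u,v$: the edges among $u,v,w$ have uniform orientations if the arcs go from both $u$ and $v$ to $w$, or from $w$ to both $u$ and $v$; they have opposite orientations if one arc goes from $u$ (resp. $v$) to $w$ and the other from $w$ to $v$ (resp. $u$). Two nonadjacent vertices $u,v$ are uniform (resp. opposite) twins if $N(u)=N(v)$ and for every common neighbor $w$ the edges among $u,v,w$ have uniform (resp. opposite) orientations. *)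

theory Defs
  imports "Jordan_Normal_Form.DL_Rank"
begin

definition oriented_graph :: "'a set \<Rightarrow> ('a \<Rightarrow> 'a \<Rightarrow> bool) \<Rightarrow> bool" where
  "oriented_graph V A \<longleftrightarrow> finite V \<and>
     (\<forall>x y. A x y \<longrightarrow> x \<in> V \<and> y \<in> V \<and> x \<noteq> y \<and> \<not> A y x)"

definition adjacent :: "('a \<Rightarrow> 'a \<Rightarrow> bool) \<Rightarrow> 'a \<Rightarrow> 'a \<Rightarrow> bool" where
  "adjacent A x y \<longleftrightarrow> A x y \<or> A y x"

definition nbhd :: "'a set \<Rightarrow> ('a \<Rightarrow> 'a \<Rightarrow> bool) \<Rightarrow> 'a \<Rightarrow> 'a set" where
  "nbhd V A x = {w \<in> V. adjacent A x w}"

definition skew_entry :: "('a \<Rightarrow> 'a \<Rightarrow> bool) \<Rightarrow> 'a \<Rightarrow> 'a \<Rightarrow> real" where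
  "skew_entry A x y = (if A x y then 1 else if A y x then -1 else 0)"

definition skew_matrix :: "'a::linorder set \<Rightarrow> ('a \<Rightarrow> 'a \<Rightarrow> bool) \<Rightarrow> real mat" where
  "skew_matrix V A = (let vs = sorted_list_of_set V in
     mat (card V) (card V) (\<lambda>(i, j). skew_entry A (vs ! i) (vs ! j)))"

definition skew_rank :: "'a::linorder set \<Rightarrow> ('a \<Rightarrow> 'a \<Rightarrow> bool) \<Rightarrow> nat" where
  "skew_rank V A = vec_space.rank (card V) (skew_matrix V A)"

definition del_vertex_arcs :: "('a \<Rightarrow> 'a \<Rightarrow> bool) \<Rightarrow> 'a \<Rightarrow> 'a \<Rightarrow> 'a \<Rightarrow> bool" where
  "del_vertex_arcs A u = (\<lambda>x y. A x y \<and> x \<noteq> u \<and> y \<noteq> u)"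

definition uniform_twins :: "'a set \<Rightarrow> ('a \<Rightarrow> 'a \<Rightarrow> bool) \<Rightarrow> 'a \<Rightarrow> 'a \<Rightarrow> bool" where
  "uniform_twins V A u v \<longleftrightarrow> u \<in> V \<and> v \<in> V \<and> u \<noteq> v \<and> \<not> adjacent A u v \<and>
     nbhd V A u = nbhd V A v \<and>
     (\<forall>w \<in> nbhd V A u. (A u w \<and> A v w) \<or> (A w u \<and> A w v))"

definition opposite_twins :: "'a set \<Rightarrow> ('a \<Rightarrow> 'a \<Rightarrow> bool) \<Rightarrow> 'a \<Rightarrow> 'a \<Rightarrow> bool" where
  "opposite_twins V A u v \<longleftrightarrow> u \<in> V \<and> v \<in> V \<and> u \<noteq> v \<and> \<not> adjacent A u v \<and>
     nbhd V A u = nbhd V A v \<and>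
     (\<forall>w \<in> nbhd V A u. (A u w \<and> A w v) \<or> (A v w \<and> A w u))"

end

theory Submission
  imports Defs
begin

lemma mv_index:
  fixes A :: "'a::field mat"
  assumes "A \<in> carrier_mat n k" "x \<in> carrier_vec k" "i < n"
  shows "(A *\<^sub>v x) $ i = (\<Sum>l<k. A $$ (i,l) * x $ l)"
  using assms unfolding mult_mat_vec_def scalar_prod_def
  by (auto simp: atLeast0LessThan intro!: sum.cong)

lemma (in vec_space) lincomb_cols:
  assumes A: "A \<in> carrier_mat n k" and J: "J \<subseteq> {..<k}" and inj: "inj_on (col A) J"
  shows "lincomb a (col A ` J) = A *\<^sub>v vec k (\<lambda>i. if i \<in> J then a (col A i) else 0)"
proof (rule eq_vecI)
  have sub: "col A ` J \<subseteq> carrier_vec n" using A by auto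
  show "dim_vec (lincomb a (col A ` J)) = dim_vec (A *\<^sub>v vec k (\<lambda>i. if i \<in> J then a (col A i) else 0))"
    using lincomb_dim[OF _ sub] A J by (simp add: finite_subset)
  fix i assume "i < dim_vec (A *\<^sub>v vec k (\<lambda>i. if i \<in> J then a (col A i) else 0))"
  hence i: "i < n" using A by auto
  have "lincomb a (col A ` J) $ i = (\<Sum>x\<in>col A ` J. a x * x $ i)"
    by (rule lincomb_index[OF i sub])
  also have "\<dots> = (\<Sum>l\<in>J. a (col A l) * col A l $ i)"
    by (rule sum.reindex[OF inj, unfolded comp_def])
  also have "\<dots> = (\<Sum>l\<in>J. a (col A l) * A $$ (i,l))"
    using J A i by (intro sum.cong) auto
  also have "\<dots> = (\<Sum>l<k. A $$ (i,l) * (if l \<in> J then a (col A l) else 0))"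
  proof -
    have "(\<Sum>l<k. A $$ (i,l) * (if l \<in> J then a (col A l) else 0)) = (\<Sum>l<k. if l \<in> J then a (col A l) * A $$ (i,l) else 0)"
      by (intro sum.cong) auto
    also have "\<dots> = (\<Sum>l\<in>{..<k} \<inter> J. a (col A l) * A $$ (i,l))"
      by (simp add: sum.inter_restrict)
    also have "{..<k} \<inter> J = J" using J by auto
    finally show ?thesis by simp
  qed
  also have "\<dots> = (A *\<^sub>v vec k (\<lambda>i. if i \<in> J then a (col A i) else 0)) $ i"
    using mv_index[OF A _ i] by simp
  finally show "lincomb a (col A ` J) $ i = (A *\<^sub>v vec k (\<lambda>i. if i \<in> J then a (col A i) else 0)) $ i" .
qed

definition indep_idx :: "'a::field mat \<Rightarrow> nat \<Rightarrow> nat set \<Rightarrow> bool" where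
  "indep_idx A k J \<longleftrightarrow> J \<subseteq> {..<k} \<and>
     (\<forall>x\<in>carrier_vec k. (\<forall>i<k. i \<notin> J \<longrightarrow> x $ i = 0) \<longrightarrow> A *\<^sub>v x = 0\<^sub>v (dim_row A) \<longrightarrow> x = 0\<^sub>v k)"

lemma (in vec_space) indep_idx_le_rank:
  assumes A: "A \<in> carrier_mat n k" and ind: "indep_idx A k J"
  shows "card J \<le> rank A"
proof -
  have J: "J \<subseteq> {..<k}" using ind unfolding indep_idx_def by auto
  have ker: "\<And>x. x \<in> carrier_vec k \<Longrightarrow> (\<forall>i<k. i \<notin> J \<longrightarrow> x $ i = 0) \<Longrightarrow> A *\<^sub>v x = 0\<^sub>v n \<Longrightarrow> x = 0\<^sub>v k"
    using ind A unfolding indep_idx_def by auto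
  have inj: "inj_on (col A) J"
  proof (rule inj_onI, rule ccontr)
    fix i j assume ij: "i \<in> J" "j \<in> J" "col A i = col A j" "i \<noteq> j"
    define x where "x = vec k (\<lambda>l. if l = i then 1 else if l = j then -1 else (0::'a))"
    have xc: "x \<in> carrier_vec k" unfolding x_def by simp
    have "A *\<^sub>v x = 0\<^sub>v n"
    proof (rule eq_vecI)
      fix r assume "r < dim_vec (0\<^sub>v n :: 'a vec)"
      hence r: "r < n" by simp
      have "(A *\<^sub>v x) $ r = (\<Sum>l<k. A $$ (r,l) * x $ l)" by (rule mv_index[OF A xc r])
      also have "\<dots> = (\<Sum>l<k. (if l = i then A $$ (r,l) else 0) - (if l = j then A $$ (r,l) else 0))"
        unfolding x_def using ij(4) by (intro sum.cong) auto
      also have "\<dots> = A $$ (r,i) - A $$ (r,j)"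
        using ij(1,2) J by (simp add: sum_subtractf subset_iff)
      also have "\<dots> = col A i $ r - col A j $ r"
      proof -
        have "i < k" "j < k" using ij(1,2) J by auto
        thus ?thesis using r A by simp
      qed
      finally show "(A *\<^sub>v x) $ r = 0\<^sub>v n $ r" using ij(3) r by simp
    qed (use A in simp)
    moreover have "\<forall>l<k. l \<notin> J \<longrightarrow> x $ l = 0" using ij unfolding x_def by auto
    ultimately have "x = 0\<^sub>v k" using ker xc by blast
    moreover have "x $ i = 1" using ij J unfolding x_def by auto
    ultimately show False using ij J by auto
  qed
  have sub: "col A ` J \<subseteq> carrier_vec n" using A by auto
  have fin: "finite J" using J finite_subset by blast
  have li: "lin_indpt (col A ` J)"
  proof (rule finite_lin_indpt2)
    show "finite (col A ` J)" using fin by simp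
    show "col A ` J \<subseteq> carrier_vec n" using sub by simp
    fix a assume lc: "lincomb a (col A ` J) = 0\<^sub>v n"
    define x where "x = vec k (\<lambda>i. if i \<in> J then a (col A i) else 0)"
    have "A *\<^sub>v x = 0\<^sub>v n" using lc lincomb_cols[OF A J inj, of a] unfolding x_def by simp
    moreover have "x \<in> carrier_vec k" unfolding x_def by simp
    moreover have "\<forall>l<k. l \<notin> J \<longrightarrow> x $ l = 0" unfolding x_def by auto
    ultimately have x0: "x = 0\<^sub>v k" using ker by blast
    show "\<forall>v\<in>col A ` J. a v = 0"
    proof
      fix v assume "v \<in> col A ` J"
      then obtain i where i: "i \<in> J" "v = col A i" by auto
      have "x $ i = a v" using i J unfolding x_def by auto
      thus "a v = 0" using x0 i J by auto
    qed
  qed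
  have "col A ` J \<subseteq> set (cols A)" using J A by (auto simp: cols_def)
  from rank_ge_card_indpt[OF A this li] show ?thesis using card_image[OF inj] by simp
qed


lemma (in vec_space) rank_indep_idx:
  assumes A: "A \<in> carrier_mat n k"
  shows "\<exists>J. indep_idx A k J \<and> card J = rank A"
proof -
  obtain S where S: "maximal S (\<lambda>T. T \<subseteq> set (cols A) \<and> lin_indpt T)"
    using maximal_exists[of "(\<lambda>T. T \<subseteq> set (cols A) \<and> lin_indpt T)" "card (set (cols A))" "{}"]
    by (meson List.finite_set card_mono empty_iff empty_subsetI finite_lin_indpt2 rev_finite_subset)
  have rk: "rank A = card S" using rank_card_indpt[OF A S] .
  have Ssub: "S \<subseteq> set (cols A)" and li: "lin_indpt S" using S unfolding maximal_def by auto
  have finS: "finite S" using Ssub finite_subset by blast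
  define idx where "idx s = (SOME i. i < k \<and> col A i = s)" for s
  have idx: "idx s < k \<and> col A (idx s) = s" if "s \<in> S" for s
  proof -
    have "\<exists>i. i < k \<and> col A i = s"
    proof -
      from that Ssub have "s \<in> set (cols A)" by auto
      then obtain i where "i < dim_col A" "col A i = s" unfolding cols_def by auto
      thus ?thesis using A by auto
    qed
    thus ?thesis unfolding idx_def by (rule someI_ex)
  qed
  have inj_idx: "inj_on idx S" by (metis idx inj_onI)
  define J where "J = idx ` S"
  have cardJ: "card J = card S" unfolding J_def using card_image[OF inj_idx] .
  have Jk: "J \<subseteq> {..<k}" unfolding J_def using idx by auto
  have colJ: "col A ` J = S" unfolding J_def image_image using idx by (auto simp: image_iff)
  have injc: "inj_on (col A) J" unfolding J_def by (rule inj_onI) (auto simp: idx)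
  have "indep_idx A k J"
    unfolding indep_idx_def
  proof (intro conjI Jk ballI impI)
    fix x :: "'a vec" assume xc: "x \<in> carrier_vec k" and supp: "\<forall>i<k. i \<notin> J \<longrightarrow> x $ i = 0"
      and Ax: "A *\<^sub>v x = 0\<^sub>v (dim_row A)"
    define a where "a s = x $ idx s" for s
    have vx: "vec k (\<lambda>i. if i \<in> J then a (col A i) else 0) = x"
    proof (rule eq_vecI)
      fix i assume "i < dim_vec x"
      hence i: "i < k" using xc by simp
      show "vec k (\<lambda>i. if i \<in> J then a (col A i) else 0) $ i = x $ i"
      proof (cases "i \<in> J")
        case True
        then obtain s where s: "s \<in> S" "i = idx s" unfolding J_def by auto
        hence "col A i = s" using idx by auto
        thus ?thesis using True i s unfolding a_def by simp
      qed (use supp i in simp)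
    qed (use xc in simp)
    have "lincomb a S = 0\<^sub>v n"
      using lincomb_cols[OF A Jk injc, of a] colJ vx Ax A by simp
    hence "a \<in> S \<rightarrow> {\<zero>\<^bsub>class_ring\<^esub>}"
      using not_lindepD[OF li finS subset_refl] by simp
    hence aJ: "x $ i = 0" if "i \<in> J" for i using that unfolding J_def a_def by (auto simp: class_ring_simps)
    show "x = 0\<^sub>v k"
      by (rule eq_vecI) (use xc supp aJ in auto)
  qed
  thus ?thesis using cardJ rk by auto
qed

lemma rank_mono_kernel:
  fixes A B :: "'a::field mat"
  assumes A: "A \<in> carrier_mat n k" and B: "B \<in> carrier_mat m k"
    and ker: "\<And>x. x \<in> carrier_vec k \<Longrightarrow> A *\<^sub>v x = 0\<^sub>v n \<Longrightarrow> B *\<^sub>v x = 0\<^sub>v m"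
  shows "vec_space.rank m B \<le> vec_space.rank n A"
proof -
  obtain J where J: "indep_idx B k J" "card J = vec_space.rank m B"
    using vec_space.rank_indep_idx[OF B] by blast
  have "indep_idx A k J" using J(1) A B ker unfolding indep_idx_def by auto
  from vec_space.indep_idx_le_rank[OF A this] J(2) show ?thesis by simp
qed


definition sh :: "nat \<Rightarrow> nat \<Rightarrow> nat" where "sh p i = (if i < p then i else Suc i)"

lemma sh_lt: "p < n \<Longrightarrow> i < n - 1 \<Longrightarrow> sh p i < n" unfolding sh_def by auto
lemma sh_neq: "sh p i \<noteq> p" unfolding sh_def by auto
lemma sh_onto: assumes "r < n" "r \<noteq> p" "p < n" shows "\<exists>i<n - 1. sh p i = r"
proof (cases "r < p")
  case True thus ?thesis using assms by (intro exI[of _ r]) (auto simp: sh_def)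
next
  case False thus ?thesis using assms by (intro exI[of _ "r - 1"]) (auto simp: sh_def)
qed

lemma (in vec_space) rank_del_col:
  assumes A: "A \<in> carrier_mat n k" and pq: "p < k" "q < k" "p \<noteq> q"
    and cp: "col A p = c \<cdot>\<^sub>v col A q"
  shows "rank A = rank (mat n (k - 1) (\<lambda>(i,j). A $$ (i, sh p j)))"
proof -
  define B where "B = mat n (k - 1) (\<lambda>(i,j). A $$ (i, sh p j))"
  have colB: "col B j = col A (sh p j)" if "j < k - 1" for j
    using that A pq sh_lt[of p k j] unfolding B_def by (intro eq_vecI) auto
  have setB: "set (cols B) = col A ` ({..<k} - {p})"
  proof
    show "set (cols B) \<subseteq> col A ` ({..<k} - {p})"
    proof
      fix v assume "v \<in> set (cols B)"
      then obtain j where j: "j < k - 1" "v = col B j" unfolding cols_def B_def by auto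
      thus "v \<in> col A ` ({..<k} - {p})" using colB sh_lt[of p k j] pq sh_neq by auto
    qed
    show "col A ` ({..<k} - {p}) \<subseteq> set (cols B)"
    proof
      fix v assume "v \<in> col A ` ({..<k} - {p})"
      then obtain r where r: "r < k" "r \<noteq> p" "v = col A r" by auto
      then obtain j where "j < k - 1" "sh p j = r" using sh_onto[of r k p] pq by auto
      thus "v \<in> set (cols B)" using colB r unfolding cols_def B_def by auto
    qed
  qed
  have setA: "set (cols A) = col A ` {..<k}" using A unfolding cols_def by auto
  have subA: "set (cols A) \<subseteq> carrier_vec n" using A by (auto simp: cols_def)
  have subB: "set (cols B) \<subseteq> carrier_vec n" unfolding B_def by (auto simp: cols_def)
  have "span (set (cols A)) = span (set (cols B))"
  proof
    show "span (set (cols B)) \<subseteq> span (set (cols A))"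
      using span_is_monotone[of "set (cols B)" "set (cols A)"] setA setB by auto
    show "span (set (cols A)) \<subseteq> span (set (cols B))"
    proof (rule span_subsetI[OF subB])
      show "set (cols A) \<subseteq> span (set (cols B))"
      proof
        fix v assume "v \<in> set (cols A)"
        then obtain r where r: "r < k" "v = col A r" using setA by auto
        show "v \<in> span (set (cols B))"
        proof (cases "r = p")
          case True
          have "col A q \<in> set (cols B)" using setB pq by auto
          hence "col A q \<in> span (set (cols B))" using span_mem[OF subB] by auto
          hence "c \<cdot>\<^sub>v col A q \<in> span (set (cols B))" using smult_in_span[OF subB] by auto
          thus ?thesis using True r cp by simp
        next
          case False
          hence "v \<in> set (cols B)" using setB r by auto
          thus ?thesis using span_mem[OF subB] by auto
        qed
      qed
    qed
  qed
  thus ?thesis unfolding rank_def B_def[symmetric] by simp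
qed

lemma rank_del_row:
  fixes B :: "'a::field mat"
  assumes B: "B \<in> carrier_mat n k" and pq: "p < n" "q < n" "p \<noteq> q"
    and rp: "\<And>j. j < k \<Longrightarrow> B $$ (p,j) = c * B $$ (q,j)"
  shows "vec_space.rank n B = vec_space.rank (n - 1) (mat (n - 1) k (\<lambda>(i,j). B $$ (sh p i, j)))"
proof -
  define C where "C = mat (n - 1) k (\<lambda>(i,j). B $$ (sh p i, j))"
  have C: "C \<in> carrier_mat (n - 1) k" unfolding C_def by simp
  have Cx: "(C *\<^sub>v x) $ i = (B *\<^sub>v x) $ (sh p i)" if "x \<in> carrier_vec k" "i < n - 1" for x i
    using mv_index[OF C that] mv_index[OF B that(1) sh_lt[OF pq(1) that(2)]] that
    unfolding C_def by simp
  have 1: "vec_space.rank (n - 1) C \<le> vec_space.rank n B"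
  proof (rule rank_mono_kernel[OF B C])
    fix x :: "'a vec" assume x: "x \<in> carrier_vec k" and "B *\<^sub>v x = 0\<^sub>v n"
    thus "C *\<^sub>v x = 0\<^sub>v (n - 1)" using Cx[OF x] sh_lt[OF pq(1)] C by (intro eq_vecI) auto
  qed
  have 2: "vec_space.rank n B \<le> vec_space.rank (n - 1) C"
  proof (rule rank_mono_kernel[OF C B])
    fix x :: "'a vec" assume x: "x \<in> carrier_vec k" and Cx0: "C *\<^sub>v x = 0\<^sub>v (n - 1)"
    have other: "(B *\<^sub>v x) $ r = 0" if rr: "r < n" "r \<noteq> p" for r
    proof -
      obtain i where "i < n - 1" "sh p i = r" using sh_onto[OF rr pq(1)] by auto
      thus ?thesis using Cx[OF x] Cx0 by (metis index_zero_vec(1))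
    qed
    have "(B *\<^sub>v x) $ p = c * (B *\<^sub>v x) $ q"
      using mv_index[OF B x pq(1)] mv_index[OF B x pq(2)] rp
      by (simp add: sum_distrib_left mult.assoc)
    hence p0: "(B *\<^sub>v x) $ p = 0" using other[OF pq(2)] pq by simp
    show "B *\<^sub>v x = 0\<^sub>v n"
    proof (rule eq_vecI)
      fix r assume "r < dim_vec (0\<^sub>v n :: 'a vec)"
      hence r: "r < n" by simp
      show "(B *\<^sub>v x) $ r = 0\<^sub>v n $ r"
        using r p0 other[OF r] by (cases "r = p") auto
    qed (use B in simp)
  qed
  show ?thesis using 1 2 unfolding C_def by simp
qed


lemma rank_del_both:
  fixes M :: "'a::field mat"
  assumes M: "M \<in> carrier_mat n n" and pq: "p < n" "q < n" "p \<noteq> q"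
    and cc: "\<And>i. i < n \<Longrightarrow> M $$ (i,p) = c * M $$ (i,q)"
    and rr: "\<And>j. j < n \<Longrightarrow> M $$ (p,j) = c * M $$ (q,j)"
  shows "vec_space.rank n M = vec_space.rank (n - 1) (mat (n - 1) (n - 1) (\<lambda>(i,j). M $$ (sh p i, sh p j)))"
proof -
  define B where "B = mat n (n - 1) (\<lambda>(i,j). M $$ (i, sh p j))"
  have "col M p = c \<cdot>\<^sub>v col M q" by (rule eq_vecI) (use M pq cc in auto)
  hence 1: "vec_space.rank n M = vec_space.rank n B"
    unfolding B_def by (rule vec_space.rank_del_col[OF M pq])
  have B: "B \<in> carrier_mat n (n - 1)" unfolding B_def by simp
  have "\<And>j. j < n - 1 \<Longrightarrow> B $$ (p,j) = c * B $$ (q,j)"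
    unfolding B_def using pq rr sh_lt[OF pq(1)] by simp
  from rank_del_row[OF B pq this]
  have 2: "vec_space.rank n B = vec_space.rank (n - 1) (mat (n - 1) (n - 1) (\<lambda>(i,j). B $$ (sh p i, j)))" .
  have "mat (n - 1) (n - 1) (\<lambda>(i,j). B $$ (sh p i, j)) = mat (n - 1) (n - 1) (\<lambda>(i,j). M $$ (sh p i, sh p j))"
    unfolding B_def using sh_lt[OF pq(1)] by (intro eq_matI) auto
  thus ?thesis using 1 2 by simp
qed

lemma sorted_remove_nth:
  assumes fin: "finite V" and p: "p < card V" and u: "sorted_list_of_set V ! p = u" and i: "i < card V - 1"
  shows "sorted_list_of_set (V - {u}) ! i = sorted_list_of_set V ! sh p i"
proof -
  define vs where "vs = sorted_list_of_set V"
  have len: "length vs = card V" and dist: "distinct vs" unfolding vs_def using fin by auto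
  have dec: "vs = take p vs @ u # drop (Suc p) vs" using id_take_nth_drop[of p vs] p len u unfolding vs_def by simp
  have nu: "u \<notin> set (take p vs)"
    using dist dec by (metis distinct_append distinct.simps(2) not_distinct_conv_prefix)
  have "sorted_list_of_set (V - {u}) = remove1 u vs"
    unfolding vs_def using fin by (simp add: sorted_list_of_set_remove)
  also have "\<dots> = take p vs @ drop (Suc p) vs"
    by (subst dec) (simp add: remove1_append nu)
  finally have eq: "sorted_list_of_set (V - {u}) = take p vs @ drop (Suc p) vs" .
  have lt: "length (take p vs) = p" using p len by simp
  show ?thesis
  proof (cases "i < p")
    case True thus ?thesis unfolding eq using lt by (simp add: nth_append sh_def vs_def)
  next
    case False thus ?thesis unfolding eq using lt p len i by (simp add: nth_append sh_def vs_def)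
  qed
qed

lemma main_u:
  fixes V :: "'a::linorder set" and A :: "'a \<Rightarrow> 'a \<Rightarrow> bool"
  assumes fin: "finite V" and uv: "u \<in> V" "v \<in> V" "u \<noteq> v"
    and tw: "\<And>w. skew_entry A w u = c * skew_entry A w v \<and> skew_entry A u w = c * skew_entry A v w"
  shows "skew_rank V A = skew_rank (V - {u}) (del_vertex_arcs A u)"
proof -
  define n where "n = card V"
  define vs where "vs = sorted_list_of_set V"
  have len: "length vs = n" and dist: "distinct vs" and setvs: "set vs = V"
    unfolding vs_def n_def using fin by auto
  obtain p where p: "p < n" "vs ! p = u" using uv(1) setvs len by (metis in_set_conv_nth)
  obtain q where q: "q < n" "vs ! q = v" using uv(2) setvs len by (metis in_set_conv_nth)
  have pq: "p \<noteq> q" using p q uv(3) by auto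
  define SM :: "real mat" where "SM = skew_matrix V A"
  have Mc: "SM \<in> carrier_mat n n" unfolding SM_def skew_matrix_def n_def by (simp add: Let_def)
  have Me: "SM $$ (i,j) = skew_entry A (vs ! i) (vs ! j)" if "i < n" "j < n" for i j
    using that unfolding SM_def skew_matrix_def n_def vs_def by (simp add: Let_def)
  have r1: "vec_space.rank n SM = vec_space.rank (n - 1) (mat (n - 1) (n - 1) (\<lambda>(i,j). SM $$ (sh p i, sh p j)))"
    by (rule rank_del_both[OF Mc p(1) q(1) pq, of c]) (use Me p q tw in auto)
  have cardu: "card (V - {u}) = n - 1" using fin uv unfolding n_def by simp
  have del: "skew_entry (del_vertex_arcs A u) x y = skew_entry A x y" if "x \<noteq> u" "y \<noteq> u" for x y
    using that unfolding skew_entry_def del_vertex_arcs_def by simp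
  have shu: "vs ! sh p i \<noteq> u" if "i < n - 1" for i
    using sh_lt[OF p(1) that] dist p len sh_neq[of p i] by (metis nth_eq_iff_index_eq)
  have "skew_matrix (V - {u}) (del_vertex_arcs A u) = mat (n - 1) (n - 1) (\<lambda>(i,j). SM $$ (sh p i, sh p j))"
  proof (rule eq_matI)
    fix i j assume ij: "i < dim_row (mat (n - 1) (n - 1) (\<lambda>(i,j). SM $$ (sh p i, sh p j)))"
      "j < dim_col (mat (n - 1) (n - 1) (\<lambda>(i,j). SM $$ (sh p i, sh p j)))"
    hence ij': "i < n - 1" "j < n - 1" by auto
    have "sorted_list_of_set (V - {u}) ! i = vs ! sh p i" "sorted_list_of_set (V - {u}) ! j = vs ! sh p j"
      using sorted_remove_nth[OF fin] p ij' unfolding n_def vs_def by auto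
    thus "skew_matrix (V - {u}) (del_vertex_arcs A u) $$ (i, j) = mat (n - 1) (n - 1) (\<lambda>(i,j). SM $$ (sh p i, sh p j)) $$ (i, j)"
      using ij' cardu del shu Me sh_lt[OF p(1)] unfolding skew_matrix_def by (simp add: Let_def)
  qed (auto simp: skew_matrix_def cardu Let_def)
  thus ?thesis using r1 unfolding skew_rank_def SM_def n_def cardu by (simp add: cardu[unfolded n_def])
qed


lemma nbhd_iff:
  assumes og: "oriented_graph V A" and eq: "nbhd V A u = nbhd V A v"
  shows "adjacent A u w \<longleftrightarrow> adjacent A v w"
proof -
  have "adjacent A x w \<Longrightarrow> w \<in> V" for x using og unfolding oriented_graph_def adjacent_def by blast
  thus ?thesis using eq unfolding nbhd_def by blast
qed

lemma uniform_entries: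
  assumes og: "oriented_graph V A" and tw: "uniform_twins V A u v"
  shows "skew_entry A w u = 1 * skew_entry A w v \<and> skew_entry A u w = 1 * skew_entry A v w"
proof -
  have eq: "nbhd V A u = nbhd V A v" and c: "\<forall>w \<in> nbhd V A u. (A u w \<and> A v w) \<or> (A w u \<and> A w v)"
    using tw unfolding uniform_twins_def by auto
  have ad: "adjacent A u w \<longleftrightarrow> adjacent A v w" by (rule nbhd_iff[OF og eq])
  have anti: "\<And>x y. A x y \<Longrightarrow> \<not> A y x" and inV: "\<And>x y. A x y \<Longrightarrow> x \<in> V \<and> y \<in> V"
    using og unfolding oriented_graph_def by auto
  have "(A w u \<longleftrightarrow> A w v) \<and> (A u w \<longleftrightarrow> A v w)"
  proof (cases "adjacent A u w")
    case True
    hence "w \<in> nbhd V A u" using inV unfolding nbhd_def adjacent_def by blast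
    hence "(A u w \<and> A v w) \<or> (A w u \<and> A w v)" using c by blast
    thus ?thesis using anti by blast
  next
    case False
    thus ?thesis using ad unfolding adjacent_def by blast
  qed
  thus ?thesis unfolding skew_entry_def by simp
qed

lemma opposite_entries:
  assumes og: "oriented_graph V A" and tw: "opposite_twins V A u v"
  shows "skew_entry A w u = (-1) * skew_entry A w v \<and> skew_entry A u w = (-1) * skew_entry A v w"
proof -
  have eq: "nbhd V A u = nbhd V A v" and c: "\<forall>w \<in> nbhd V A u. (A u w \<and> A w v) \<or> (A v w \<and> A w u)"
    using tw unfolding opposite_twins_def by auto
  have ad: "adjacent A u w \<longleftrightarrow> adjacent A v w" by (rule nbhd_iff[OF og eq])
  have anti: "\<And>x y. A x y \<Longrightarrow> \<not> A y x" and inV: "\<And>x y. A x y \<Longrightarrow> x \<in> V \<and> y \<in> V"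
    using og unfolding oriented_graph_def by auto
  have "(A w u \<longleftrightarrow> A v w) \<and> (A u w \<longleftrightarrow> A w v)"
  proof (cases "adjacent A u w")
    case True
    hence "w \<in> nbhd V A u" using inV unfolding nbhd_def adjacent_def by blast
    hence "(A u w \<and> A w v) \<or> (A v w \<and> A w u)" using c by blast
    thus ?thesis using anti by blast
  next
    case False
    thus ?thesis using ad unfolding adjacent_def by blast
  qed
  thus ?thesis unfolding skew_entry_def using anti by auto
qed

lemma uniform_sym: "uniform_twins V A u v \<Longrightarrow> uniform_twins V A v u"
  unfolding uniform_twins_def adjacent_def by auto
lemma opposite_sym: "opposite_twins V A u v \<Longrightarrow> opposite_twins V A v u"
  unfolding opposite_twins_def adjacent_def by auto

theorem lemma2p7:
  fixes V :: "'a::linorder set" and A :: "'a \<Rightarrow> 'a \<Rightarrow> bool" and u v :: 'a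
  assumes "oriented_graph V A"
    and "uniform_twins V A u v \<or> opposite_twins V A u v"
  shows "skew_rank V A = skew_rank (V - {u}) (del_vertex_arcs A u) \<and>
         skew_rank (V - {u}) (del_vertex_arcs A u) = skew_rank (V - {v}) (del_vertex_arcs A v)"
proof -
  have fin: "finite V" using assms(1) unfolding oriented_graph_def by auto
  have uv: "u \<in> V" "v \<in> V" "u \<noteq> v"
    using assms(2) unfolding uniform_twins_def opposite_twins_def by auto
  have vu: "v \<noteq> u" using uv by auto
  have 1: "skew_rank V A = skew_rank (V - {u}) (del_vertex_arcs A u)"
  proof (cases "uniform_twins V A u v")
    case True
    show ?thesis by (rule main_u[OF fin uv, of _ 1]) (rule uniform_entries[OF assms(1) True])
  next
    case False
    hence o: "opposite_twins V A u v" using assms(2) by blast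
    show ?thesis by (rule main_u[OF fin uv, of _ "-1"]) (rule opposite_entries[OF assms(1) o])
  qed
  have 2: "skew_rank V A = skew_rank (V - {v}) (del_vertex_arcs A v)"
  proof (cases "uniform_twins V A u v")
    case True
    show ?thesis by (rule main_u[OF fin uv(2) uv(1) vu, of _ 1]) (rule uniform_entries[OF assms(1) uniform_sym[OF True]])
  next
    case False
    hence o: "opposite_twins V A u v" using assms(2) by blast
    show ?thesis by (rule main_u[OF fin uv(2) uv(1) vu, of _ "-1"]) (rule opposite_entries[OF assms(1) opposite_sym[OF o]])
  qed
  from 1 2 show ?thesis by simp
qed

end
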